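(* Let $\Omega\subset\mathbb{R}^n$ ($n\ge 1$) be a bounded Lipschitz domain and let $b\in W^{2,\infty}(\Omega)$. For $p>0$ let $\lambda_1(p)>0$ be the principal eigenvalue of $$-\Delta u+p\,\nabla b\cdot\nabla u=\lambda u\ \text{ in }\Omega,\qquad u=0\ \text{ on }\partial\Omega .$$ Suppose there exists a potential well $\Omega'\subset\Omega$ (for the potential $b$) with depth $b_0>0$. Then $$\liminf_{p\to\infty}\frac1p\log\frac{1}{\lambda_1(p)}\ \ge\ b_0 .$$ In other words, for every $\omega\in(0,b_0)$ there exists $C>0$ such that $0<\lambda_1(p)\le Ce^{-\omega p}$ for all $p\ge 0$.
   Context: The principal eigenvalue $\lambda_1(p)$ is the unique number $\lambda$ for which the Dirichlet problem above has a solution $u\in H^1_0(\Omega)$ with $u>0$ in $\Omega$ (and $\max u=1$); equivalently $\lambda_1(p)=\min_{u\in H^1_0(\Omega)\setminus\{0\}}\frac{\int_\Omega e^{-pb}|\nabla u|^2\,dx}{\int_\Omega e^{-pb}u^2\,dx}$. A potential well for $b$ is a nonempty Lipschitz subdomain $\Omega'\subset\Omega$ such that $\min_{x\in\overline{\Omega'}}b(x)<\min_{x\in\partial\Omega'}b(x)$; its depth is $b_0:=\min_{\partial\Omega'}b-\min_{\overline{\Omega'}}b>0$. *)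

theory Defs
  imports "HOL-Analysis.Analysis"
begin

definition partial :: "('a::euclidean_space \<Rightarrow> real) \<Rightarrow> 'a \<Rightarrow> 'a \<Rightarrow> real" where
  "partial f i x = frechet_derivative f (at x) i"

fun Ck :: "nat \<Rightarrow> ('a::euclidean_space \<Rightarrow> real) \<Rightarrow> bool" where
  "Ck 0 f = continuous_on UNIV f"
| "Ck (Suc k) f = ((\<forall>x. f differentiable (at x)) \<and> continuous_on UNIV f \<and>
                    (\<forall>i\<in>Basis. Ck k (partial f i)))"

definition smooth_fun :: "('a::euclidean_space \<Rightarrow> real) \<Rightarrow> bool" where
  "smooth_fun f = (\<forall>k. Ck k f)"

definition test_fun :: "'a::euclidean_space set \<Rightarrow> ('a \<Rightarrow> real) \<Rightarrow> bool" where
  "test_fun \<Omega> \<phi> = (smooth_fun \<phi> \<and>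
     (\<exists>K. compact K \<and> K \<subseteq> \<Omega> \<and> (\<forall>x. x \<notin> K \<longrightarrow> \<phi> x = 0)))"

definition Linf_on :: "'a::euclidean_space set \<Rightarrow> ('a \<Rightarrow> real) \<Rightarrow> bool" where
  "Linf_on \<Omega> f = ((\<lambda>x. indicator \<Omega> x * f x) \<in> borel_measurable lborel \<and>
     (\<exists>M. AE x in lborel. x \<in> \<Omega> \<longrightarrow> \<bar>f x\<bar> \<le> M))"

definition weak_partial :: "'a::euclidean_space set \<Rightarrow> ('a \<Rightarrow> real) \<Rightarrow> 'a \<Rightarrow> ('a \<Rightarrow> real) \<Rightarrow> bool" where
  "weak_partial \<Omega> f i g = (\<forall>\<phi>. test_fun \<Omega> \<phi> \<longrightarrow>
     set_integrable lborel \<Omega> (\<lambda>x. f x * partial \<phi> i x) \<and>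
     set_integrable lborel \<Omega> (\<lambda>x. g x * \<phi> x) \<and>
     (LINT x:\<Omega>|lborel. f x * partial \<phi> i x) = - (LINT x:\<Omega>|lborel. g x * \<phi> x))"

definition W2inf :: "'a::euclidean_space set \<Rightarrow> ('a \<Rightarrow> real) \<Rightarrow> bool" where
  "W2inf \<Omega> b = (Linf_on \<Omega> b \<and>
     (\<forall>i\<in>Basis. \<exists>Di. Linf_on \<Omega> Di \<and> weak_partial \<Omega> b i Di \<and>
        (\<forall>j\<in>Basis. \<exists>Dij. Linf_on \<Omega> Dij \<and> weak_partial \<Omega> Di j Dij)))"

(* Lipschitz boundary: near every boundary point, \<Omega> is the region below the graph
   of a Lipschitz function over the hyperplane orthogonal to some unit vector e *)
definition lipschitz_boundary :: "'a::euclidean_space set \<Rightarrow> bool" where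
  "lipschitz_boundary \<Omega> = (\<forall>x\<in>frontier \<Omega>. \<exists>r>0. \<exists>e L \<gamma>.
     norm e = 1 \<and> L-lipschitz_on {z. e \<bullet> z = 0} \<gamma> \<and>
     \<Omega> \<inter> ball x r = {y \<in> ball x r. e \<bullet> y < \<gamma> (y - (e \<bullet> y) *\<^sub>R e)})"

definition lipschitz_domain :: "'a::euclidean_space set \<Rightarrow> bool" where
  "lipschitz_domain \<Omega> = (bounded \<Omega> \<and> open \<Omega> \<and> connected \<Omega> \<and> \<Omega> \<noteq> {} \<and> lipschitz_boundary \<Omega>)"

definition grad_sq :: "('a::euclidean_space \<Rightarrow> real) \<Rightarrow> 'a \<Rightarrow> real" where
  "grad_sq u x = (\<Sum>i\<in>Basis. (partial u i x)\<^sup>2)"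

(* Principal Dirichlet eigenvalue via the weighted Rayleigh quotient; the minimum over
   H^1_0(\<Omega>) equals the infimum over the dense subspace C_c^\<infinity>(\<Omega>). *)
definition lambda1 :: "'a::euclidean_space set \<Rightarrow> ('a \<Rightarrow> real) \<Rightarrow> real \<Rightarrow> real" where
  "lambda1 \<Omega> b p = (INF u \<in> {u. test_fun \<Omega> u \<and> (\<exists>x. u x \<noteq> 0)}.
      (LINT x:\<Omega>|lborel. exp (- p * b x) * grad_sq u x) /
      (LINT x:\<Omega>|lborel. exp (- p * b x) * (u x)\<^sup>2))"

definition potential_well :: "'a::euclidean_space set \<Rightarrow> ('a \<Rightarrow> real) \<Rightarrow> 'a set \<Rightarrow> bool" where
  "potential_well \<Omega> b \<Omega>' = (\<Omega>' \<subseteq> \<Omega> \<and> lipschitz_domain \<Omega>' \<and>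
     (INF x\<in>closure \<Omega>'. b x) < (INF x\<in>frontier \<Omega>'. b x))"

definition well_depth :: "('a::euclidean_space \<Rightarrow> real) \<Rightarrow> 'a set \<Rightarrow> real" where
  "well_depth b \<Omega>' = (INF x\<in>frontier \<Omega>'. b x) - (INF x\<in>closure \<Omega>'. b x)"

end

theory Submission
  imports Defs "HOL-Computational_Algebra.Polynomial"
begin


lemma partial_eq:
  assumes "(f has_derivative D) (at x)" shows "partial f i x = D i"
  using frechet_derivative_at[OF assms] by (simp add: partial_def)

lemma Ck_Suc_D: "Ck (Suc k) f \<Longrightarrow> Ck k f"
proof (induction k arbitrary: f)
  case 0 thus ?case by simp
next
  case (Suc k)
  from Suc.prems have "\<forall>i\<in>Basis. Ck (Suc k) (partial f i)" by simp
  hence "\<forall>i\<in>Basis. Ck k (partial f i)" using Suc.IH by blast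
  thus ?case using Suc.prems by simp
qed

lemma Ck_le: "k \<le> m \<Longrightarrow> Ck m f \<Longrightarrow> Ck k f"
proof (induction m)
  case 0 thus ?case by simp
next
  case (Suc m) thus ?case using Ck_Suc_D by (cases "k = Suc m") auto
qed

lemma Ck_cont: "Ck k f \<Longrightarrow> continuous_on UNIV f"
  by (cases k) auto

lemma Ck_const_aux: "\<forall>c::real. Ck k (\<lambda>x::'a::euclidean_space. c)"
proof (induction k)
  case 0 thus ?case by simp
next
  case (Suc k)
  show ?case
  proof
    fix c :: real
    have p: "partial (\<lambda>x::'a. c) i = (\<lambda>x. 0)" for i
      by (rule ext, rule partial_eq) (auto intro: derivative_eq_intros)
    have "\<forall>i\<in>Basis. Ck k (partial (\<lambda>x::'a. c) i)" unfolding p using Suc.IH by blast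
    thus "Ck (Suc k) (\<lambda>x::'a. c)" by simp
  qed
qed

lemma Ck_const: "Ck k (\<lambda>x::'a::euclidean_space. c)"
  using Ck_const_aux by blast

lemma Ck_add: "Ck k f \<Longrightarrow> Ck k g \<Longrightarrow> Ck k (\<lambda>x. f x + g x)"
proof (induction k arbitrary: f g)
  case 0 thus ?case by (simp add: continuous_on_add continuous_on_mult)
next
  case (Suc k)
  have "partial (\<lambda>x. f x + g x) i = (\<lambda>x. partial f i x + partial g i x)" for i
  proof
    fix x
    have "(f has_derivative frechet_derivative f (at x)) (at x)" "(g has_derivative frechet_derivative g (at x)) (at x)"
      using Suc.prems by (auto simp: frechet_derivative_works[symmetric])
    then show "partial (\<lambda>x. f x + g x) i x = partial f i x + partial g i x"
      by (subst partial_eq[OF has_derivative_add]) (auto simp: partial_def)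
  qed
  moreover have "\<forall>x. (\<lambda>x. f x + g x) differentiable at x"
    using Suc.prems by (simp add: differentiable_add)
  moreover have "continuous_on UNIV (\<lambda>x. f x + g x)"
    using Suc.prems by (simp add: continuous_on_add)
  ultimately show ?case using Suc by simp
qed

lemma Ck_mult: "Ck k f \<Longrightarrow> Ck k g \<Longrightarrow> Ck k (\<lambda>x. f x * g x)"
proof (induction k arbitrary: f g)
  case 0 thus ?case by (simp add: continuous_on_add continuous_on_mult)
next
  case (Suc k)
  have "partial (\<lambda>x. f x * g x) i = (\<lambda>x. f x * partial g i x + partial f i x * g x)" for i
  proof
    fix x
    have "(f has_derivative frechet_derivative f (at x)) (at x)" "(g has_derivative frechet_derivative g (at x)) (at x)"
      using Suc.prems by (auto simp: frechet_derivative_works[symmetric])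
    then show "partial (\<lambda>x. f x * g x) i x = f x * partial g i x + partial f i x * g x"
      by (subst partial_eq[OF has_derivative_mult]) (auto simp: partial_def)
  qed
  moreover have "Ck k f" "Ck k g" using Suc.prems Ck_Suc_D by blast+
  moreover have "\<forall>x. (\<lambda>x. f x * g x) differentiable at x"
    using Suc.prems by (simp add: differentiable_mult)
  moreover have "continuous_on UNIV (\<lambda>x. f x * g x)"
    using Suc.prems by (simp add: continuous_on_mult)
  ultimately show ?case using Suc by (simp add: Ck_add)
qed

lemma Ck_compose:
  fixes h :: "real \<Rightarrow> real" and q :: "'a::euclidean_space \<Rightarrow> real"
  shows "Ck k h \<Longrightarrow> Ck k q \<Longrightarrow> Ck k (\<lambda>x. h (q x))"
proof (induction k arbitrary: h q)
  case 0 thus ?case using continuous_on_compose2[of UNIV h UNIV q] by simp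
next
  case (Suc k)
  have "partial (\<lambda>x. h (q x)) i = (\<lambda>x. partial h 1 (q x) * partial q i x)" for i
  proof
    fix x
    have dh: "(h has_derivative frechet_derivative h (at (q x))) (at (q x))" and
      dq: "(q has_derivative frechet_derivative q (at x)) (at x)"
      using Suc.prems by (auto simp: frechet_derivative_works[symmetric])
    have bl: "linear (frechet_derivative h (at (q x)))" using dh has_derivative_linear by blast
    have "frechet_derivative h (at (q x)) (frechet_derivative q (at x) i) =
       frechet_derivative q (at x) i * frechet_derivative h (at (q x)) 1"
      using linear_scale[OF bl, of "frechet_derivative q (at x) i" 1] by simp
    then show "partial (\<lambda>x. h (q x)) i x = partial h 1 (q x) * partial q i x"
      by (subst partial_eq[OF diff_chain_at[OF dq dh, unfolded o_def]]) (auto simp: partial_def)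
  qed
  moreover have "Ck k q" using Suc.prems Ck_Suc_D by blast
  moreover have "Ck k (partial h 1)" using Suc.prems by simp
  moreover have "\<forall>x. (\<lambda>x. h (q x)) differentiable at x"
    using Suc.prems differentiable_chain_at[of q _ h, unfolded o_def] by simp
  moreover have "continuous_on UNIV (\<lambda>x. h (q x))"
    using Suc.prems continuous_on_compose2[of UNIV h UNIV q] by simp
  ultimately show ?case using Suc by (simp add: Ck_mult)
qed



lemma Basis_real: "(\<forall>i\<in>(Basis::real set). P i) \<longleftrightarrow> P 1"
  by (simp add: Basis_real_def)

lemma Ck_Suc_real:
  fixes h g :: "real \<Rightarrow> real"
  assumes "\<And>t. (h has_real_derivative g t) (at t)" "Ck k g"
  shows "Ck (Suc k) h"
proof -
  have p: "partial h 1 = g"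
    by (rule ext, rule partial_eq[OF has_field_derivative_imp_has_derivative[OF assms(1)], THEN trans]) simp
  have "\<forall>x. h differentiable at x" using assms(1) real_differentiable_def by blast
  moreover have "continuous_on UNIV h"
    using assms(1) by (meson DERIV_isCont continuous_at_imp_continuous_on)
  ultimately show ?thesis using p assms(2) by (simp add: Basis_real)
qed

lemma Ck_affine_aux: "\<forall>a c. Ck k (\<lambda>x::'a::euclidean_space. x \<bullet> a + c)"
proof (induction k)
  case 0 thus ?case by (auto intro!: continuous_intros)
next
  case (Suc k)
  show ?case
  proof (intro allI)
    fix a :: 'a and c :: real
    have p: "partial (\<lambda>x::'a. x \<bullet> a + c) i = (\<lambda>x. x \<bullet> 0 + (i \<bullet> a))" for i
      by (rule ext, rule partial_eq) (auto intro!: derivative_eq_intros)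
    have "\<forall>i\<in>Basis. Ck k (partial (\<lambda>x::'a. x \<bullet> a + c) i)" unfolding p using Suc.IH by blast
    moreover have "\<forall>x. (\<lambda>x::'a. x \<bullet> a + c) differentiable at x" by (auto intro!: derivative_intros)
    moreover have "continuous_on UNIV (\<lambda>x::'a. x \<bullet> a + c)" by (auto intro!: continuous_intros)
    ultimately show "Ck (Suc k) (\<lambda>x::'a. x \<bullet> a + c)" by simp
  qed
qed

lemma Ck_affine: "Ck k (\<lambda>x::'a::euclidean_space. x \<bullet> a + c)"
  using Ck_affine_aux by blast

lemma Ck_sqdist: "Ck k (\<lambda>x::'a::euclidean_space. (x - y) \<bullet> (x - y))"
proof -
  have p: "partial (\<lambda>x::'a. (x - y) \<bullet> (x - y)) i = (\<lambda>x. x \<bullet> (2 *\<^sub>R i) + (- 2 * (y \<bullet> i)))" for i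
    by (rule ext, rule partial_eq[THEN trans]) (auto intro!: derivative_eq_intros simp: inner_diff_left inner_diff_right inner_commute)
  have "\<forall>i\<in>Basis. Ck k (partial (\<lambda>x::'a. (x - y) \<bullet> (x - y)) i)"
    by (intro ballI, unfold p, rule Ck_affine)
  moreover have "\<forall>x. (\<lambda>x::'a. (x - y) \<bullet> (x - y)) differentiable at x" by (auto intro!: derivative_intros)
  moreover have "continuous_on UNIV (\<lambda>x::'a. (x - y) \<bullet> (x - y))" by (auto intro!: continuous_intros)
  ultimately have "Ck (Suc k) (\<lambda>x::'a. (x - y) \<bullet> (x - y))" by simp
  thus ?thesis by (rule Ck_Suc_D)
qed

lemma Ck_sum: "finite F \<Longrightarrow> (\<And>y. y \<in> F \<Longrightarrow> Ck k (g y)) \<Longrightarrow> Ck k (\<lambda>x::'a::euclidean_space. \<Sum>y\<in>F. g y x)"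
  by (induction F rule: finite_induct) (auto intro: Ck_add Ck_const)

lemma smooth_mult: "smooth_fun f \<Longrightarrow> smooth_fun g \<Longrightarrow> smooth_fun (\<lambda>x. f x * g x)"
  by (simp add: smooth_fun_def Ck_mult)
lemma smooth_compose: "smooth_fun (h::real\<Rightarrow>real) \<Longrightarrow> smooth_fun (q::'a::euclidean_space\<Rightarrow>real) \<Longrightarrow> smooth_fun (\<lambda>x. h (q x))"
  by (simp add: smooth_fun_def Ck_compose)
lemma smooth_const: "smooth_fun (\<lambda>x::'a::euclidean_space. c)"
  by (simp add: smooth_fun_def Ck_const)
lemma smooth_affine: "smooth_fun (\<lambda>x::'a::euclidean_space. x \<bullet> a + c)"
  by (simp add: smooth_fun_def Ck_affine)
lemma smooth_sqdist: "smooth_fun (\<lambda>x::'a::euclidean_space. (x - y) \<bullet> (x - y))"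
  by (simp add: smooth_fun_def Ck_sqdist)
lemma smooth_sum: "finite F \<Longrightarrow> (\<And>y. y \<in> F \<Longrightarrow> smooth_fun (g y)) \<Longrightarrow> smooth_fun (\<lambda>x::'a::euclidean_space. \<Sum>y\<in>F. g y x)"
  by (simp add: smooth_fun_def Ck_sum)

definition fP :: "real poly \<Rightarrow> real \<Rightarrow> real" where
  "fP P t = (if t \<le> 0 then 0 else poly P (inverse t) * exp (- inverse t))"

definition Qd :: "real poly \<Rightarrow> real poly" where
  "Qd P = [:0,0,1:] * (P - pderiv P)"

lemma poly_exp_lim:
  fixes P :: "real poly"
  shows "((\<lambda>s. poly P s * exp (- s)) \<longlongrightarrow> 0) at_top"
proof -
  have e: "poly P s * exp (- s) = (\<Sum>i\<le>degree P. coeff P i * (s ^ i / exp s))" for s :: real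
    by (simp add: poly_altdef exp_minus divide_inverse sum_distrib_right mult.assoc)
  have "((\<lambda>s::real. \<Sum>i\<le>degree P. coeff P i * (s ^ i / exp s)) \<longlongrightarrow> (\<Sum>i\<le>degree P. coeff P i * 0)) at_top"
    by (intro tendsto_sum tendsto_mult tendsto_const tendsto_power_div_exp_0)
  thus ?thesis unfolding e by simp
qed

lemma fP_deriv: "(fP P has_real_derivative fP (Qd P) t) (at t)"
proof (cases "t > 0")
  case True
  have d: "((\<lambda>t. poly P (inverse t) * exp (- inverse t)) has_real_derivative fP (Qd P) t) (at t)"
    by (rule DERIV_cong[OF DERIV_mult[OF DERIV_chain2[OF poly_DERIV DERIV_inverse]
         DERIV_chain2[OF DERIV_exp DERIV_minus[OF DERIV_inverse]]]])
       (use True in \<open>simp_all add: fP_def Qd_def algebra_simps power2_eq_square\<close>)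
  show ?thesis
    apply (rule has_field_derivative_transform_within_open[of _ _ t "{0<..}"])
    using d True by (auto simp: fP_def)
next
  case False
  show ?thesis
  proof (cases "t < 0")
    case True
    show ?thesis
      apply (rule has_field_derivative_transform_within_open[of "\<lambda>_. 0" _ t "{..<0}"])
      using True by (auto simp: fP_def)
  next
    case False
    with \<open>\<not> t > 0\<close> have t0: "t = 0" by simp
    have l: "((\<lambda>y. (fP P y - fP P 0) / (y - 0)) \<longlongrightarrow> 0) (at_left 0)"
    proof (rule Lim_transform_eventually[OF tendsto_const])
      show "\<forall>\<^sub>F x in at_left 0. 0 = (fP P x - fP P 0) / (x - 0)"
        by (rule eventually_mono[OF eventually_at_left_real[of "-1" 0]]) (auto simp: fP_def)
    qed
    have r0: "((\<lambda>y. poly (pCons 0 P) (inverse y) * exp (- inverse y)) \<longlongrightarrow> 0) (at_right 0)"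
      using poly_exp_lim[of "pCons 0 P", unfolded filterlim_at_top_to_right] by simp
    have r: "((\<lambda>y. (fP P y - fP P 0) / (y - 0)) \<longlongrightarrow> 0) (at_right 0)"
    proof (rule Lim_transform_eventually[OF r0])
      show "\<forall>\<^sub>F x in at_right 0. poly (pCons 0 P) (inverse x) * exp (- inverse x) = (fP P x - fP P 0) / (x - 0)"
        by (rule eventually_mono[OF eventually_at_right_real[of 0 1]]) (auto simp: fP_def field_simps)
    qed
    have "fP (Qd P) 0 = 0" by (simp add: fP_def)
    then show ?thesis unfolding t0 has_field_derivative_iff
      using l r filterlim_at_split by force
  qed
qed

lemma Ck_fP: "\<forall>P. Ck k (fP P)"
proof (induction k)
  case 0
  show ?case using fP_deriv by (meson Ck.simps(1) DERIV_isCont continuous_at_imp_continuous_on)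
next
  case (Suc k) thus ?case using Ck_Suc_real[OF fP_deriv] by blast
qed

definition psi :: "real \<Rightarrow> real" where "psi = fP 1"

lemma psi_smooth: "smooth_fun psi" unfolding smooth_fun_def psi_def using Ck_fP by blast
lemma psi_pos: "t > 0 \<Longrightarrow> psi t > 0" by (simp add: psi_def fP_def)
lemma psi_zero: "t \<le> 0 \<Longrightarrow> psi t = 0" by (simp add: psi_def fP_def)
lemma psi_nonneg: "psi t \<ge> 0" by (simp add: psi_def fP_def)
lemma psi_mono: "0 < s \<Longrightarrow> s \<le> t \<Longrightarrow> psi s \<le> psi t"
  by (simp add: psi_def fP_def le_imp_inverse_le)



definition phi :: "real \<Rightarrow> real" where "phi t = psi t * psi (1 - t)"

lemma phi_smooth: "smooth_fun phi"
proof -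
  have "smooth_fun (\<lambda>t::real. psi (t \<bullet> (-1) + 1))"
    by (rule smooth_compose[OF psi_smooth smooth_affine])
  hence "smooth_fun (\<lambda>t::real. psi (1 - t))" by (simp add: inner_real_def)
  thus ?thesis unfolding phi_def[abs_def] by (rule smooth_mult[OF psi_smooth])
qed

lemma phi_cont: "continuous_on S phi"
  using phi_smooth Ck_cont continuous_on_subset smooth_fun_def by blast

lemma phi_zero: "t \<le> 0 \<or> t \<ge> 1 \<Longrightarrow> phi t = 0"
  by (auto simp: phi_def psi_zero)

lemma phi_nonneg: "phi t \<ge> 0" by (simp add: phi_def psi_nonneg)

definition Hs :: "real \<Rightarrow> real" where "Hs s = integral {-1..s} phi"

lemma Hs_zero: "s \<le> 0 \<Longrightarrow> Hs s = 0"
proof -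
  assume s: "s \<le> 0"
  have "integral {-1..s} phi = integral {-1..s} (\<lambda>_. 0::real)"
    by (rule integral_cong) (use s in \<open>auto intro: phi_zero\<close>)
  thus ?thesis by (simp add: Hs_def)
qed

lemma phi_int: "phi integrable_on {a..b}"
  by (rule integrable_continuous_real[OF phi_cont])

lemma Hs_one: "s \<ge> 1 \<Longrightarrow> Hs s = Hs 1"
proof -
  assume s: "s \<ge> 1"
  have "integral {1..s} phi = integral {1..s} (\<lambda>_. 0::real)"
    by (rule integral_cong) (auto intro: phi_zero)
  hence z: "integral {1..s} phi = 0" by simp
  have "integral {-1..1} phi + integral {1..s} phi = integral {-1..s} phi"
    by (rule Henstock_Kurzweil_Integration.integral_combine) (use s phi_int in auto)
  thus ?thesis using z by (simp add: Hs_def)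
qed

lemma Hs_pos: "Hs 1 > 0"
proof -
  have ge: "Hs 1 \<ge> 0" unfolding Hs_def
    by (rule Henstock_Kurzweil_Integration.integral_nonneg[OF phi_int phi_nonneg])
  have "Hs 1 \<noteq> 0"
  proof
    assume "Hs 1 = 0"
    hence "(phi has_integral 0) (cbox (-1) 1)"
      using phi_int[of "-1" 1] by (simp add: Hs_def has_integral_integral)
    hence "phi (1/2) = 0"
      by (rule has_integral_0_cbox_imp_0[OF phi_cont, rotated]) (auto simp: phi_nonneg)
    moreover have "phi (1/2) > 0" by (simp add: phi_def psi_pos)
    ultimately show False by simp
  qed
  with ge show ?thesis by simp
qed

lemma Hs_deriv: "(Hs has_real_derivative phi t) (at t)"
proof (cases "t > -1")
  case True
  have "((\<lambda>x. integral {-1..x} phi) has_real_derivative phi t) (at t within {-1..t+1})"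
    by (rule integral_has_real_derivative[OF phi_cont]) (use True in auto)
  moreover have "t \<in> interior {-1..t+1}" using True by simp
  ultimately show ?thesis unfolding Hs_def[abs_def] using at_within_interior by metis
next
  case False
  show ?thesis
    apply (rule has_field_derivative_transform_within_open[of "\<lambda>_. 0" _ t "{..<0}"])
    using False by (auto simp: Hs_zero phi_zero)
qed

lemma Hs_smooth: "smooth_fun Hs"
  unfolding smooth_fun_def
proof
  fix k
  have "Ck (Suc k) Hs" using Ck_Suc_real[OF Hs_deriv] phi_smooth smooth_fun_def by blast
  thus "Ck k Hs" by (rule Ck_Suc_D)
qed

lemma smooth_add: "smooth_fun f \<Longrightarrow> smooth_fun g \<Longrightarrow> smooth_fun (\<lambda>x. f x + g x)"
  by (simp add: smooth_fun_def Ck_add)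



lemma bump_exists:
  fixes K U :: "'a::euclidean_space set"
  assumes K: "compact K" "K \<noteq> {}" and U: "open U" "K \<subseteq> U" "bounded U"
  obtains u L V where "smooth_fun u" "compact L" "L \<subseteq> U" "\<And>x. x \<notin> L \<Longrightarrow> u x = 0"
    "open V" "K \<subseteq> V" "\<And>x. x \<in> V \<Longrightarrow> u x = 1"
proof -
  have "U \<noteq> UNIV" using U(3) by auto
  hence "- U \<noteq> {}" by auto
  hence sd: "setdist K (- U) > 0"
    using setdist_gt_0_compact_closed[OF K(1), of "- U"] U K by auto
  define d where "d = setdist K (- U) / 3"
  have d0: "d > 0" using sd by (simp add: d_def)
  have inU: "z \<in> U" if "y \<in> K" "dist y z < 3 * d" for y z
  proof (rule ccontr)
    assume "z \<notin> U"
    hence "setdist K (- U) \<le> dist y z" using setdist_le_dist[of y K z "- U"] that by auto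
    thus False using that d_def by simp
  qed
  have "K \<subseteq> (\<Union>y\<in>K. ball y d)" using d0 by auto
  then obtain F where F: "F \<subseteq> K" "finite F" "K \<subseteq> (\<Union>y\<in>F. ball y d)"
    using compactE_image[OF K(1), of K "\<lambda>y. ball y d"] by auto
  define S where "S x = (\<Sum>y\<in>F. psi (4 * d\<^sup>2 - (x - y) \<bullet> (x - y)))" for x
  define s0 where "s0 = psi (3 * d\<^sup>2)"
  have s0: "s0 > 0" unfolding s0_def using d0 by (simp add: psi_pos)
  define u where "u x = Hs (S x * (1 / s0)) * (1 / Hs 1)" for x
  have smS: "smooth_fun S" unfolding S_def[abs_def]
  proof (rule smooth_sum[OF F(2)])
    fix y
    have "smooth_fun (\<lambda>x::'a. (-1) * ((x - y) \<bullet> (x - y)) + 4 * d\<^sup>2)"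
      by (intro smooth_add smooth_mult smooth_const smooth_sqdist)
    moreover have "(\<lambda>x::'a. (-1) * ((x - y) \<bullet> (x - y)) + 4 * d\<^sup>2) = (\<lambda>x::'a. 4 * d\<^sup>2 - (x - y) \<bullet> (x - y))"
      by auto
    ultimately have "smooth_fun (\<lambda>x::'a. 4 * d\<^sup>2 - (x - y) \<bullet> (x - y))" by simp
    thus "smooth_fun (\<lambda>x::'a. psi (4 * d\<^sup>2 - (x - y) \<bullet> (x - y)))"
      by (rule smooth_compose[OF psi_smooth])
  qed
  have "smooth_fun u" unfolding u_def[abs_def]
    by (intro smooth_mult smooth_compose[OF Hs_smooth] smS smooth_const)
  moreover define L where "L = (\<Union>y\<in>F. cball y (2 * d))"
  moreover have "compact L" unfolding L_def using F(2) by (auto intro!: compact_UN)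
  moreover have "L \<subseteq> U"
  proof
    fix z assume "z \<in> L"
    then obtain y where "y \<in> F" "dist y z \<le> 2 * d" by (auto simp: L_def)
    thus "z \<in> U" using F(1) d0 inU[of y z] by auto
  qed
  moreover have "u x = 0" if "x \<notin> L" for x
  proof -
    have "psi (4 * d\<^sup>2 - (x - y) \<bullet> (x - y)) = 0" if "y \<in> F" for y
    proof -
      have "dist y x > 2 * d" using \<open>x \<notin> L\<close> that by (auto simp: L_def)
      hence "(2 * d)\<^sup>2 < (dist y x)\<^sup>2" using d0 by (intro power_strict_mono) auto
      hence "4 * d\<^sup>2 < (x - y) \<bullet> (x - y)"
        by (simp add: dist_norm power2_norm_eq_inner norm_minus_commute power_mult_distrib)
      thus ?thesis by (intro psi_zero) simp
    qed
    hence "S x = 0" by (simp add: S_def)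
    thus ?thesis by (simp add: u_def Hs_zero)
  qed
  moreover define V where "V = (\<Union>y\<in>F. ball y d)"
  moreover have "open V" unfolding V_def by auto
  moreover have "K \<subseteq> V" using F(3) V_def by simp
  moreover have "u x = 1" if "x \<in> V" for x
  proof -
    obtain y where y: "y \<in> F" "dist y x < d" using \<open>x \<in> V\<close> by (auto simp: V_def)
    have "(dist y x)\<^sup>2 < d\<^sup>2" using y d0 by (intro power_strict_mono) auto
    hence q: "(x - y) \<bullet> (x - y) < d\<^sup>2"
      by (simp add: dist_norm power2_norm_eq_inner norm_minus_commute)
    have "s0 \<le> psi (4 * d\<^sup>2 - (x - y) \<bullet> (x - y))"
      unfolding s0_def by (rule psi_mono) (use d0 q in auto)
    also have "\<dots> \<le> S x" unfolding S_def
      by (rule member_le_sum[OF y(1)]) (auto simp: psi_nonneg F(2))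
    finally have "S x * (1 / s0) \<ge> 1" using s0 by (simp add: field_simps)
    hence "Hs (S x * (1 / s0)) = Hs 1" by (rule Hs_one)
    thus ?thesis using Hs_pos by (simp add: u_def)
  qed
  ultimately show ?thesis using that by blast
qed



lemma int_cs:
  fixes g :: "'a::euclidean_space \<Rightarrow> real"
  assumes "continuous_on UNIV g" "compact K" "\<And>x. x \<notin> K \<Longrightarrow> g x = 0"
  shows "integrable lborel g"
proof -
  have "g = (\<lambda>x. indicator K x *\<^sub>R g x)" using assms(3) by (auto simp: indicator_def fun_eq_iff)
  moreover have "integrable lborel (\<lambda>x. indicator K x *\<^sub>R g x)"
    by (rule borel_integrable_compact[OF assms(2) continuous_on_subset[OF assms(1)]]) auto
  ultimately show ?thesis by simp
qed

lemma deriv_const_open: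
  assumes "(f has_derivative D) (at x)" "open W" "x \<in> W" "\<And>y. y \<in> W \<Longrightarrow> f y = c"
  shows "D = (\<lambda>_. 0)"
proof -
  have "((\<lambda>_. c) has_derivative (\<lambda>_. 0)) (at x)" by (rule has_derivative_const)
  hence "(f has_derivative (\<lambda>_. 0)) (at x)"
    by (rule has_derivative_transform_within_open[OF _ assms(2,3)]) (use assms(4) in auto)
  thus ?thesis using assms(1) has_derivative_unique by blast
qed

lemma translate_integral:
  fixes f :: "'a::euclidean_space \<Rightarrow> real"
  assumes "continuous_on UNIV f"
  shows "integral\<^sup>L lborel (\<lambda>x. f (c + x)) = integral\<^sup>L lborel f"
proof -
  have m: "(+) c \<in> borel_measurable lborel"
    by (simp add: borel_measurable_continuous_onI continuous_intros measurable_lborel1)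
  have "integral\<^sup>L (distr lborel borel ((+) c)) f = integral\<^sup>L lborel (\<lambda>x. f (c + x))"
    by (rule integral_distr[OF m[unfolded measurable_lborel1] borel_measurable_continuous_onI[OF assms]])
  thus ?thesis by (simp add: lborel_distr_plus)
qed

lemma div_zero:
  fixes f :: "'a::euclidean_space \<Rightarrow> real"
  assumes der: "\<And>x. (f has_derivative D x) (at x)"
    and cont: "continuous_on UNIV (\<lambda>x. D x e)"
    and K: "compact K" "\<And>x. x \<notin> K \<Longrightarrow> f x = 0"
  shows "integral\<^sup>L lborel (\<lambda>x. D x e) = 0"
proof -
  have Dz: "D x e = 0" if "x \<notin> K" for x
  proof -
    have "open (- K)" using K(1) compact_imp_closed by blast
    hence "D x = (\<lambda>_. 0)"
      using deriv_const_open[OF der[of x], of "- K" 0] that K(2) by auto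
    thus ?thesis by simp
  qed
  have fc: "continuous_on UNIV f"
    using der has_derivative_continuous continuous_at_imp_continuous_on by blast
  obtain r where r: "r > 0" "K \<subseteq> cball 0 r"
    using compact_imp_bounded[OF K(1)] bounded_subset_cball by (metis bounded_pos mem_cball_0 subsetI)
  have "bounded ((\<lambda>y. D y e) ` K)"
    by (rule compact_imp_bounded[OF compact_continuous_image[OF continuous_on_subset[OF cont] K(1)]]) auto
  then obtain a where a: "\<And>y. y \<in> K \<Longrightarrow> \<bar>D y e\<bar> \<le> a" unfolding bounded_real by auto
  define M where "M = max a 0"
  have M: "\<bar>D y e\<bar> \<le> M" for y using a[of y] Dz[of y] by (cases "y \<in> K") (auto simp: M_def)
  have M0: "M \<ge> 0" by (simp add: M_def)
  define K' where "K' = cball (0::'a) (r + norm e)"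
  define s where "s t x = (f (x + (1/t) *\<^sub>R e) - f x) * t" for t x
  have fint: "integrable lborel f" using int_cs[OF fc K] .
  have shift_zero: "f (x + h *\<^sub>R e) = 0" if "x \<notin> cball 0 (r + \<bar>h\<bar> * norm e)" for x h
  proof -
    have "norm (x + h *\<^sub>R e) \<ge> norm x - \<bar>h\<bar> * norm e"
      using norm_diff_ineq[of x "h *\<^sub>R e"] by simp
    hence "x + h *\<^sub>R e \<notin> K" using that r(2) by auto
    thus ?thesis by (rule K(2))
  qed
  have fshc: "continuous_on UNIV (\<lambda>x. f (x + h *\<^sub>R e))" for h
    by (rule continuous_on_compose2[OF fc]) (auto intro!: continuous_intros)
  have fsint: "integrable lborel (\<lambda>x. f (x + h *\<^sub>R e))" for h
    by (rule int_cs[OF fshc compact_cball shift_zero])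
  have sint0: "integral\<^sup>L lborel (s t) = 0" for t
  proof -
    have "integral\<^sup>L lborel (\<lambda>x. f (x + (1/t) *\<^sub>R e)) = integral\<^sup>L lborel f"
      using translate_integral[OF fc, of "(1/t) *\<^sub>R e"] by (simp add: add.commute)
    thus ?thesis unfolding s_def[abs_def]
      by (simp add: Bochner_Integration.integral_diff[OF fsint fint])
  qed
  have lim: "((\<lambda>t. integral\<^sup>L lborel (s t)) \<longlongrightarrow> integral\<^sup>L lborel (\<lambda>x. D x e)) at_top"
  proof (rule integral_dominated_convergence_at_top[where w = "\<lambda>x. indicator K' x * M"])
    show "(\<lambda>x. D x e) \<in> borel_measurable lborel"
      using borel_measurable_continuous_onI[OF cont] by (simp add: measurable_lborel1)
    show "s t \<in> borel_measurable lborel" for t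
    proof -
      have "continuous_on UNIV (s t)" unfolding s_def[abs_def]
        by (intro continuous_intros fshc fc)
      thus ?thesis using borel_measurable_continuous_onI by (simp add: measurable_lborel1)
    qed
    show "integrable lborel (\<lambda>x. indicator K' x * M)"
      by (auto simp: K'_def intro!: emeasure_compact_finite integrable_mult_left)
    show "AE x in lborel. ((\<lambda>t. s t x) \<longlongrightarrow> D x e) at_top"
    proof (rule AE_I2)
      fix x
      have g: "((\<lambda>h. f (x + h *\<^sub>R e)) has_real_derivative D x e) (at 0)"
      proof -
        have "((\<lambda>h::real. x + h *\<^sub>R e) has_derivative (\<lambda>h. h *\<^sub>R e)) (at 0)"
          by (auto intro!: derivative_eq_intros)
        from diff_chain_at[OF this, of f "D x"] der[of x]
        have "((\<lambda>h. f (x + h *\<^sub>R e)) has_derivative (\<lambda>h. D x (h *\<^sub>R e))) (at 0)"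
          by (simp add: o_def)
        moreover have "D x (h *\<^sub>R e) = D x e * h" for h
          using linear_scale[OF has_derivative_linear[OF der[of x]]] by simp
        ultimately show ?thesis
          by (simp add: has_field_derivative_def)
      qed
      hence q: "((\<lambda>h. (f (x + h *\<^sub>R e) - f (x + 0 *\<^sub>R e)) / (h - 0)) \<longlongrightarrow> D x e) (at_right 0)"
        using g[unfolded has_field_derivative_iff] filterlim_at_split by blast
      have q2: "((\<lambda>t. (f (x + inverse t *\<^sub>R e) - f (x + 0 *\<^sub>R e)) / (inverse t - 0)) \<longlongrightarrow> D x e) at_top"
        by (rule filterlim_compose[OF q filterlim_inverse_at_right_top])
      show "((\<lambda>t. s t x) \<longlongrightarrow> D x e) at_top"
      proof (rule Lim_transform_eventually[OF q2])
        show "\<forall>\<^sub>F t in at_top. (f (x + inverse t *\<^sub>R e) - f (x + 0 *\<^sub>R e)) / (inverse t - 0) = s t x"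
          using eventually_gt_at_top[of 0] by eventually_elim (simp add: s_def divide_inverse)
      qed
    qed
    show "\<forall>\<^sub>F t in at_top. AE x in lborel. norm (s t x) \<le> indicator K' x * M"
      using eventually_ge_at_top[of 1]
    proof eventually_elim
      case (elim t)
      show ?case
      proof (rule AE_I2)
        fix x
        define h where "h = 1 / t"
        have h: "0 < h" "h \<le> 1" using elim by (auto simp: h_def)
        show "norm (s t x) \<le> indicator K' x * M"
        proof (cases "x \<in> K'")
          case False
          have "x \<notin> K"
          proof
            assume "x \<in> K"
            hence "norm x \<le> r" using r(2) by auto
            thus False using False norm_ge_zero[of e] unfolding K'_def mem_cball_0 by linarith
          qed
          moreover have "x \<notin> cball 0 (r + \<bar>h\<bar> * norm e)"
          proof -
            have "h * norm e \<le> norm e" using h by (simp add: mult_left_le_one_le)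
            thus ?thesis using False h unfolding K'_def mem_cball_0 by auto
          qed
          ultimately show ?thesis using K(2) shift_zero[of x h] False by (simp add: s_def h_def)
        next
          case True
          let ?g = "\<lambda>\<tau>. f (x + \<tau> *\<^sub>R e)"
          have gd: "(?g has_real_derivative D (x + \<tau> *\<^sub>R e) e) (at \<tau>)" for \<tau>
          proof -
            have "((\<lambda>h::real. x + h *\<^sub>R e) has_derivative (\<lambda>h. h *\<^sub>R e)) (at \<tau>)"
              by (auto intro!: derivative_eq_intros)
            from diff_chain_at[OF this, of f "D (x + \<tau> *\<^sub>R e)"] der[of "x + \<tau> *\<^sub>R e"]
            have "(?g has_derivative (\<lambda>h. D (x + \<tau> *\<^sub>R e) (h *\<^sub>R e))) (at \<tau>)"
              by (simp add: o_def)
            moreover have "D (x + \<tau> *\<^sub>R e) (h *\<^sub>R e) = D (x + \<tau> *\<^sub>R e) e * h" for h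
              using linear_scale[OF has_derivative_linear[OF der[of "x + \<tau> *\<^sub>R e"]]] by simp
            ultimately show ?thesis
              by (simp add: has_field_derivative_def)
          qed
          have "\<exists>l z. 0 < z \<and> z < h \<and> DERIV ?g z :> l \<and> ?g h - ?g 0 = (h - 0) * l"
            by (rule MVT[OF h(1)]) (use gd in \<open>auto intro!: DERIV_isCont continuous_at_imp_continuous_on real_differentiable_def[THEN iffD2]\<close>)
          then obtain l z where lz: "DERIV ?g z :> l" "?g h - ?g 0 = h * l" by auto
          have "l = D (x + z *\<^sub>R e) e" using DERIV_unique[OF lz(1) gd] .
          hence "\<bar>?g h - ?g 0\<bar> \<le> h * M" using lz(2) M h by (simp add: abs_mult mult_left_mono)
          hence "\<bar>?g h - ?g 0\<bar> * t \<le> h * M * t" using elim by (simp add: mult_right_mono)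
          also have "\<dots> = M" using elim by (simp add: h_def)
          finally show ?thesis using True elim by (simp add: s_def h_def abs_mult)
        qed
      qed
    qed
  qed
  moreover have "((\<lambda>t. integral\<^sup>L lborel (s t)) \<longlongrightarrow> 0) at_top" by (simp add: sint0)
  ultimately show ?thesis using tendsto_unique[OF trivial_limit_at_top_linorder] by blast
qed



lemma smooth_diff:
  assumes "smooth_fun u"
  shows "\<And>x. (u has_derivative frechet_derivative u (at x)) (at x)"
    and "continuous_on UNIV u"
    and "\<And>i. i \<in> Basis \<Longrightarrow> continuous_on UNIV (partial u i)"
    and "\<And>i x. partial u i x = frechet_derivative u (at x) i"
proof -
  have c1: "Ck (Suc 0) u" using assms smooth_fun_def by blast
  show "\<And>x. (u has_derivative frechet_derivative u (at x)) (at x)"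
    using c1 by (simp add: frechet_derivative_works[symmetric])
  show "continuous_on UNIV u" using c1 by simp
  show "\<And>i. i \<in> Basis \<Longrightarrow> continuous_on UNIV (partial u i)" using c1 by simp
  show "\<And>i x. partial u i x = frechet_derivative u (at x) i" by (simp add: partial_def)
qed

lemma partial_zero_outside:
  assumes "smooth_fun u" "compact K" "\<And>x. x \<notin> K \<Longrightarrow> u x = 0" "x \<notin> K"
  shows "partial u i x = 0"
proof -
  have "open (- K)" using assms(2) compact_imp_closed by blast
  hence "frechet_derivative u (at x) = (\<lambda>_. 0)"
    using deriv_const_open[OF smooth_diff(1)[OF assms(1), of x], of "- K" 0] assms(3,4) by auto
  thus ?thesis by (simp add: partial_def)
qed

lemma poincare:
  fixes u :: "'a::euclidean_space \<Rightarrow> real"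
  assumes u: "smooth_fun u" and K: "compact K" "\<And>x. x \<notin> K \<Longrightarrow> u x = 0"
    and e: "e \<in> Basis" and R: "\<And>x. x \<in> K \<Longrightarrow> norm x \<le> R"
  shows "integral\<^sup>L lborel (\<lambda>x. (u x)\<^sup>2) \<le> 4 * R\<^sup>2 * integral\<^sup>L lborel (\<lambda>x. (partial u e x)\<^sup>2)"
proof -
  define Du where "Du x = frechet_derivative u (at x)" for x
  note der = smooth_diff(1)[OF u, folded Du_def]
  have pu: "partial u e x = Du x e" for x by (simp add: partial_def Du_def)
  have pc: "continuous_on UNIV (partial u e)" using smooth_diff(3)[OF u e] .
  have uc: "continuous_on UNIV u" using smooth_diff(2)[OF u] .
  have pz: "x \<notin> K \<Longrightarrow> partial u e x = 0" for x using partial_zero_outside[OF u K] .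
  define D where "D x h = (x \<bullet> e) * (u x * Du x h + Du x h * u x) + (h \<bullet> e) * (u x * u x)" for x h
  have fd: "((\<lambda>x. (x \<bullet> e) * (u x * u x)) has_derivative D x) (at x)" for x
    unfolding D_def
    by (rule has_derivative_mult[OF has_derivative_inner_left[OF has_derivative_ident] has_derivative_mult[OF der der]])
  have ee: "e \<bullet> e = 1" using e by simp
  have De: "D x e = 2 * ((x \<bullet> e) * u x * partial u e x) + (u x)\<^sup>2" for x
    by (simp add: D_def pu ee power2_eq_square algebra_simps)
  have Dc: "continuous_on UNIV (\<lambda>x. D x e)" unfolding De
    by (intro continuous_intros uc pc)
  have "integral\<^sup>L lborel (\<lambda>x. D x e) = 0"
    by (rule div_zero[OF fd Dc K(1)]) (use K(2) in simp)
  hence "integral\<^sup>L lborel (\<lambda>x. 2 * ((x \<bullet> e) * u x * partial u e x) + (u x)\<^sup>2) = 0"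
    unfolding De .
  moreover have iB: "integrable lborel (\<lambda>x. (x \<bullet> e) * u x * partial u e x)"
    by (rule int_cs[OF _ K(1)]) (auto intro!: continuous_intros uc pc simp: K(2))
  moreover have iA: "integrable lborel (\<lambda>x. (u x)\<^sup>2)"
    by (rule int_cs[OF _ K(1)]) (auto intro!: continuous_intros uc simp: K(2))
  moreover have iC: "integrable lborel (\<lambda>x. (partial u e x)\<^sup>2)"
    by (rule int_cs[OF _ K(1)]) (auto intro!: continuous_intros pc simp: pz)
  ultimately have sumz: "2 * integral\<^sup>L lborel (\<lambda>x. (x \<bullet> e) * u x * partial u e x) + integral\<^sup>L lborel (\<lambda>x. (u x)\<^sup>2) = 0"
    by (simp add: Bochner_Integration.integral_add)
  have pw: "- 2 * ((x \<bullet> e) * u x * partial u e x) \<le> (u x)\<^sup>2 / 2 + 2 * R\<^sup>2 * (partial u e x)\<^sup>2" for x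
  proof (cases "x \<in> K")
    case True
    have t: "(x \<bullet> e)\<^sup>2 \<le> R\<^sup>2"
      using Basis_le_norm[OF e, of x] R[OF True] by (simp add: abs_le_square_iff power2_le_iff_abs_le)
    define a where "a = u x"
    define v where "v = partial u e x"
    define s where "s = x \<bullet> e"
    have "0 \<le> (a + 2 * s * v)\<^sup>2" by simp
    hence "- 2 * (s * a * v) \<le> a\<^sup>2 / 2 + 2 * s\<^sup>2 * v\<^sup>2" by (simp add: power2_eq_square algebra_simps)
    also have "\<dots> \<le> a\<^sup>2 / 2 + 2 * R\<^sup>2 * v\<^sup>2"
      using t unfolding s_def by (simp add: mult_right_mono)
    finally show ?thesis by (simp add: a_def v_def s_def)
  next
    case False thus ?thesis using K(2) by simp
  qed
  have "integral\<^sup>L lborel (\<lambda>x. - 2 * ((x \<bullet> e) * u x * partial u e x)) \<le>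
        integral\<^sup>L lborel (\<lambda>x. (u x)\<^sup>2 / 2 + 2 * R\<^sup>2 * (partial u e x)\<^sup>2)"
    by (rule integral_mono) (use iA iB iC pw in auto)
  hence "- 2 * integral\<^sup>L lborel (\<lambda>x. (x \<bullet> e) * u x * partial u e x) \<le>
        integral\<^sup>L lborel (\<lambda>x. (u x)\<^sup>2) / 2 + 2 * R\<^sup>2 * integral\<^sup>L lborel (\<lambda>x. (partial u e x)\<^sup>2)"
    using iA iC by (simp add: Bochner_Integration.integral_add)
  thus ?thesis using sumz by linarith
qed



lemma int_cs2:
  fixes h :: "'a::euclidean_space \<Rightarrow> real"
  assumes "compact L" "continuous_on L h" "\<And>x. x \<notin> L \<Longrightarrow> h x = 0"
  shows "integrable lborel h"
proof -
  have "h = (\<lambda>x. indicator L x *\<^sub>R h x)" using assms(3) by (auto simp: indicator_def fun_eq_iff)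
  thus ?thesis using borel_integrable_compact[OF assms(1,2)] by simp
qed

lemma set_int_eq:
  fixes f :: "'a::euclidean_space \<Rightarrow> real"
  assumes "L \<subseteq> A" "\<And>x. x \<notin> L \<Longrightarrow> f x = 0"
  shows "set_lebesgue_integral lborel A f = integral\<^sup>L lborel f"
proof -
  have "(\<lambda>x. indicator A x *\<^sub>R f x) = f"
    using assms by (auto simp: indicator_def fun_eq_iff)
  thus ?thesis by (simp add: set_lebesgue_integral_def)
qed

lemma int_ge_ball:
  fixes g :: "'a::euclidean_space \<Rightarrow> real"
  assumes "integrable lborel g" "\<And>x. 0 \<le> g x" "\<And>x. x \<in> ball c d \<Longrightarrow> \<epsilon> \<le> g x"
  shows "\<epsilon> * measure lborel (ball c d) \<le> integral\<^sup>L lborel g"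
proof -
  have fin: "emeasure lborel (ball c d) < \<infinity>" by (rule emeasure_bounded_finite) simp
  have ii: "integrable lborel (\<lambda>x. indicator (ball c d) x * \<epsilon>)"
    using fin by (intro integrable_mult_left) auto
  have "integral\<^sup>L lborel (\<lambda>x. indicator (ball c d) x * \<epsilon>) \<le> integral\<^sup>L lborel g"
    by (rule integral_mono[OF ii assms(1)]) (use assms(2,3) in \<open>auto simp: indicator_def\<close>)
  moreover have "integral\<^sup>L lborel (\<lambda>x. indicator (ball c d) x * \<epsilon>) = measure lborel (ball c d) * \<epsilon>"
    using fin by simp
  ultimately show ?thesis by (simp add: mult.commute)
qed

lemma int_pos_cont:
  fixes g :: "'a::euclidean_space \<Rightarrow> real"
  assumes "integrable lborel g" "\<And>x. 0 \<le> g x" "open W" "continuous_on W g" "x1 \<in> W" "g x1 > 0"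
  shows "integral\<^sup>L lborel g > 0"
proof -
  have "isCont g x1" using assms(3,4,5) continuous_on_eq_continuous_at by blast
  hence "(g \<longlongrightarrow> g x1) (at x1)" by (simp add: isCont_def)
  hence "eventually (\<lambda>x. g x1 / 2 < g x) (at x1)"
    by (rule order_tendstoD(1)) (use assms(6) in simp)
  then obtain d where d: "d > 0" "\<And>x. x \<noteq> x1 \<Longrightarrow> dist x x1 < d \<Longrightarrow> g x1 / 2 < g x"
    unfolding eventually_at by auto
  have "g x1 / 2 \<le> g x" if "x \<in> ball x1 d" for x
    using d(2)[of x] that assms(6) by (cases "x = x1") (auto simp: dist_commute)
  hence "g x1 / 2 * measure lborel (ball x1 d) \<le> integral\<^sup>L lborel g"
    by (rule int_ge_ball[OF assms(1,2)])
  moreover have "measure lborel (ball x1 d) > 0" using d(1) by simp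
  moreover have "0 < g x1 / 2 * measure lborel (ball x1 d)"
    using assms(6) \<open>measure lborel (ball x1 d) > 0\<close> by (intro mult_pos_pos) auto
  ultimately show ?thesis by linarith
qed

lemma grad_sq_ge: "i \<in> Basis \<Longrightarrow> (partial u i x)\<^sup>2 \<le> grad_sq u x"
  unfolding grad_sq_def by (rule member_le_sum) auto

lemma grad_sq_nonneg: "grad_sq u x \<ge> 0"
  unfolding grad_sq_def by (simp add: sum_nonneg)

lemma grad_sq_cont: "smooth_fun u \<Longrightarrow> continuous_on UNIV (grad_sq u)"
  unfolding grad_sq_def[abs_def] by (intro continuous_intros smooth_diff(3)) auto

lemma grad_sq_zero:
  assumes "smooth_fun u" "compact K" "\<And>x. x \<notin> K \<Longrightarrow> u x = 0" "x \<notin> K"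
  shows "grad_sq u x = 0"
proof -
  have "\<And>i. partial u i x = 0" using partial_zero_outside[OF assms] .
  thus ?thesis unfolding grad_sq_def by simp
qed

lemma lam_lower:
  fixes \<Omega> :: "'a::euclidean_space set" and b :: "'a \<Rightarrow> real" and e :: 'a and u :: "'a \<Rightarrow> real"
  assumes op: "open \<Omega>" and bc: "continuous_on (closure \<Omega>) b" and p: "p \<ge> 0"
    and mM: "\<And>x. x \<in> \<Omega> \<Longrightarrow> m \<le> b x \<and> b x \<le> M" and R: "R > 0" "\<And>x. x \<in> \<Omega> \<Longrightarrow> norm x \<le> R"
    and e: "e \<in> Basis" and tu: "test_fun \<Omega> u" and nz: "u x1 \<noteq> 0"
  shows "(LINT x:\<Omega>|lborel. exp (- p * b x) * (u x)\<^sup>2) > 0"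
    and "exp (- p * (M - m)) / (4 * R\<^sup>2) * (LINT x:\<Omega>|lborel. exp (- p * b x) * (u x)\<^sup>2)
         \<le> (LINT x:\<Omega>|lborel. exp (- p * b x) * grad_sq u x)"
proof -
  obtain L where L: "compact L" "L \<subseteq> \<Omega>" "\<And>x. x \<notin> L \<Longrightarrow> u x = 0" and u: "smooth_fun u"
    using tu unfolding test_fun_def by auto
  have x1: "x1 \<in> L" using nz L(3) by auto
  have bL: "continuous_on L b" by (rule continuous_on_subset[OF bc]) (use L(2) closure_subset in auto)
  have bO: "continuous_on \<Omega> b" by (rule continuous_on_subset[OF bc closure_subset])
  have uc: "continuous_on UNIV u" using smooth_diff(2)[OF u] .
  have gz: "\<And>x. x \<notin> L \<Longrightarrow> grad_sq u x = 0" using grad_sq_zero[OF u L(1) L(3)] .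
  have pz: "\<And>x. x \<notin> L \<Longrightarrow> partial u e x = 0" using partial_zero_outside[OF u L(1) L(3)] .
  have den: "(LINT x:\<Omega>|lborel. exp (- p * b x) * (u x)\<^sup>2) = integral\<^sup>L lborel (\<lambda>x. exp (- p * b x) * (u x)\<^sup>2)"
    by (rule set_int_eq[OF L(2)]) (simp add: L(3))
  have num: "(LINT x:\<Omega>|lborel. exp (- p * b x) * grad_sq u x) = integral\<^sup>L lborel (\<lambda>x. exp (- p * b x) * grad_sq u x)"
    by (rule set_int_eq[OF L(2)]) (simp add: gz)
  have iden: "integrable lborel (\<lambda>x. exp (- p * b x) * (u x)\<^sup>2)"
    by (rule int_cs2[OF L(1)]) (auto intro!: continuous_intros bL continuous_on_subset[OF uc] simp: L(3))
  have inum: "integrable lborel (\<lambda>x. exp (- p * b x) * grad_sq u x)"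
    by (rule int_cs2[OF L(1)]) (auto intro!: continuous_intros bL continuous_on_subset[OF grad_sq_cont[OF u]] simp: gz)
  have iu: "integrable lborel (\<lambda>x. (u x)\<^sup>2)"
    by (rule int_cs[OF _ L(1)]) (auto intro!: continuous_intros uc simp: L(3))
  have ip: "integrable lborel (\<lambda>x. (partial u e x)\<^sup>2)"
    by (rule int_cs[OF _ L(1)]) (auto intro!: continuous_intros smooth_diff(3)[OF u e] simp: pz)
  show "(LINT x:\<Omega>|lborel. exp (- p * b x) * (u x)\<^sup>2) > 0"
    unfolding den
    by (rule int_pos_cont[OF iden _ op, of x1]) (use x1 L(2) nz in \<open>auto intro!: continuous_intros bO continuous_on_subset[OF uc]\<close>)
  have i1: "integral\<^sup>L lborel (\<lambda>x. exp (- p * b x) * (u x)\<^sup>2) \<le> integral\<^sup>L lborel (\<lambda>x. exp (- p * m) * (u x)\<^sup>2)"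
  proof (rule integral_mono[OF iden])
    show "integrable lborel (\<lambda>x. exp (- p * m) * (u x)\<^sup>2)" using iu by simp
    fix x show "exp (- p * b x) * (u x)\<^sup>2 \<le> exp (- p * m) * (u x)\<^sup>2"
    proof (cases "x \<in> L")
      case True
      hence "m \<le> b x" using mM L(2) by auto
      hence "- p * b x \<le> - p * m" using p by (simp add: mult_left_mono)
      thus ?thesis by (intro mult_right_mono) auto
    next
      case False thus ?thesis using L(3) by simp
    qed
  qed
  have i2: "integral\<^sup>L lborel (\<lambda>x. exp (- p * M) * (partial u e x)\<^sup>2) \<le> integral\<^sup>L lborel (\<lambda>x. exp (- p * b x) * grad_sq u x)"
  proof (rule integral_mono[OF _ inum])
    show "integrable lborel (\<lambda>x. exp (- p * M) * (partial u e x)\<^sup>2)" using ip by simp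
    fix x show "exp (- p * M) * (partial u e x)\<^sup>2 \<le> exp (- p * b x) * grad_sq u x"
    proof (cases "x \<in> L")
      case True
      hence "b x \<le> M" using mM L(2) by auto
      hence "- p * M \<le> - p * b x" using p by (simp add: mult_left_mono)
      hence "exp (- p * M) \<le> exp (- p * b x)" by simp
      thus ?thesis using grad_sq_ge[OF e, of u x] by (intro mult_mono) auto
    next
      case False thus ?thesis using pz gz by simp
    qed
  qed
  have P: "integral\<^sup>L lborel (\<lambda>x. (u x)\<^sup>2) \<le> 4 * R\<^sup>2 * integral\<^sup>L lborel (\<lambda>x. (partial u e x)\<^sup>2)"
    by (rule poincare[OF u L(1) L(3) e]) (use R(2) L(2) in auto)
  define A where "A = integral\<^sup>L lborel (\<lambda>x. (u x)\<^sup>2)"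
  define B where "B = integral\<^sup>L lborel (\<lambda>x. (partial u e x)\<^sup>2)"
  define Dn where "Dn = integral\<^sup>L lborel (\<lambda>x. exp (- p * b x) * (u x)\<^sup>2)"
  define Nm where "Nm = integral\<^sup>L lborel (\<lambda>x. exp (- p * b x) * grad_sq u x)"
  have 1: "Dn \<le> exp (- p * m) * A" using i1 unfolding Dn_def A_def by simp
  have 2: "exp (- p * M) * B \<le> Nm" using i2 unfolding Nm_def B_def by simp
  have 3: "A \<le> 4 * R\<^sup>2 * B" using P unfolding A_def B_def .
  have R2: "4 * R\<^sup>2 > 0" using R(1) by simp
  have "exp (- p * (M - m)) / (4 * R\<^sup>2) * Dn \<le> exp (- p * (M - m)) / (4 * R\<^sup>2) * (exp (- p * m) * (4 * R\<^sup>2 * B))"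
    using 1 3 R2 by (intro mult_left_mono) (auto intro: order_trans mult_left_mono)
  also have "\<dots> = exp (- p * M) * B"
    using R2 by (simp add: field_simps exp_add[symmetric] algebra_simps)
  also have "\<dots> \<le> Nm" by (rule 2)
  finally show "exp (- p * (M - m)) / (4 * R\<^sup>2) * (LINT x:\<Omega>|lborel. exp (- p * b x) * (u x)\<^sup>2)
         \<le> (LINT x:\<Omega>|lborel. exp (- p * b x) * grad_sq u x)"
    unfolding den num Dn_def Nm_def .
qed



lemma grad_sq_const_open:
  assumes "smooth_fun u" "open V" "x \<in> V" "\<And>y. y \<in> V \<Longrightarrow> u y = c"
  shows "grad_sq u x = 0"
proof -
  have "frechet_derivative u (at x) = (\<lambda>_. 0)"
    by (rule deriv_const_open[OF smooth_diff(1)[OF assms(1)] assms(2,3,4)])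
  thus ?thesis by (simp add: grad_sq_def partial_def)
qed

theorem mainTheorem1:
  fixes \<Omega> \<Omega>' :: "'a::euclidean_space set" and b :: "'a \<Rightarrow> real"
  assumes "lipschitz_domain \<Omega>"
    and "W2inf \<Omega> b"
    and "continuous_on (closure \<Omega>) b"
    and "potential_well \<Omega> b \<Omega>'"
  shows "Liminf at_top (\<lambda>p. ereal (ln (1 / lambda1 \<Omega> b p) / p)) \<ge> ereal (well_depth b \<Omega>')
    \<and> (\<forall>\<omega>. 0 < \<omega> \<and> \<omega> < well_depth b \<Omega>' \<longrightarrow>
         (\<exists>C>0. \<forall>p\<ge>0. 0 < lambda1 \<Omega> b p \<and> lambda1 \<Omega> b p \<le> C * exp (- \<omega> * p)))"
proof -
  have Ob: "bounded \<Omega>" and Oo: "open \<Omega>" using assms(1) by (auto simp: lipschitz_domain_def)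
  have sub: "\<Omega>' \<subseteq> \<Omega>" and O'b: "bounded \<Omega>'" and O'o: "open \<Omega>'" and O'ne: "\<Omega>' \<noteq> {}"
    and well: "(INF x\<in>closure \<Omega>'. b x) < (INF x\<in>frontier \<Omega>'. b x)"
    using assms(4) by (auto simp: potential_well_def lipschitz_domain_def)
  note bc = assms(3)
  have cc: "compact (closure \<Omega>)" using Ob by (simp add: compact_closure)
  have "bounded (b ` closure \<Omega>)" by (rule compact_imp_bounded[OF compact_continuous_image[OF bc cc]])
  then obtain a where a: "\<And>x. x \<in> closure \<Omega> \<Longrightarrow> \<bar>b x\<bar> \<le> a" unfolding bounded_real by auto
  have mM: "\<And>x. x \<in> \<Omega> \<Longrightarrow> - a \<le> b x \<and> b x \<le> a" using a closure_subset by fastforce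
  obtain R where R: "R > 0" "\<And>x. x \<in> \<Omega> \<Longrightarrow> norm x \<le> R" using Ob bounded_pos by blast
  obtain e :: 'a where e: "e \<in> Basis" using nonempty_Basis by blast
  define Sset where "Sset = {u. test_fun \<Omega> u \<and> (\<exists>x. u x \<noteq> 0)}"
  define Q where "Q p u = (LINT x:\<Omega>|lborel. exp (- p * b x) * grad_sq u x) /
      (LINT x:\<Omega>|lborel. exp (- p * b x) * (u x)\<^sup>2)" for p u
  have lam: "lambda1 \<Omega> b p = (INF u\<in>Sset. Q p u)" for p
    by (simp add: lambda1_def Sset_def Q_def)
  define c where "c p = exp (- p * (a - - a)) / (4 * R\<^sup>2)" for p
  have cpos: "c p > 0" for p using R by (simp add: c_def)
  have Qlow: "c p \<le> Q p u" if "p \<ge> 0" "u \<in> Sset" for p u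
  proof -
    from that obtain x1 where tu: "test_fun \<Omega> u" and x1: "u x1 \<noteq> 0" by (auto simp: Sset_def)
    note ll = lam_lower[OF Oo bc that(1) mM R e tu x1]
    show ?thesis unfolding Q_def c_def using ll by (simp add: pos_le_divide_eq)
  qed
  have bddQ: "bdd_below (Q p ` Sset)" if "p \<ge> 0" for p
    by (rule bdd_belowI2[of _ "c p"]) (rule Qlow[OF that])
  have cl: "closure \<Omega>' \<subseteq> closure \<Omega>" using sub closure_mono by blast
  have bc': "continuous_on (closure \<Omega>') b" using continuous_on_subset[OF bc cl] .
  have cc': "compact (closure \<Omega>')" using O'b by (simp add: compact_closure)
  have fr_ne: "frontier \<Omega>' \<noteq> {}"
    using O'ne O'b frontier_eq_empty[of \<Omega>'] by (metis not_bounded_UNIV)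
  have frcl: "frontier \<Omega>' \<subseteq> closure \<Omega>'" by (simp add: frontier_def)
  have ab: "\<And>x. x \<in> closure \<Omega> \<Longrightarrow> - a \<le> b x" using a by (force simp: abs_le_iff)
  have bdd1: "bdd_below (b ` closure \<Omega>')"
    using ab cl by (intro bdd_belowI2[of _ "- a"]) blast
  have bdd2: "bdd_below (b ` frontier \<Omega>')"
    using ab cl frcl by (intro bdd_belowI2[of _ "- a"]) blast
  obtain x0 where x0: "x0 \<in> closure \<Omega>'" "\<And>y. y \<in> closure \<Omega>' \<Longrightarrow> b x0 \<le> b y"
    using continuous_attains_inf[OF cc' _ bc'] O'ne by auto
  define m' where "m' = (INF x\<in>closure \<Omega>'. b x)"
  define B where "B = (INF x\<in>frontier \<Omega>'. b x)"
  have m'x0: "m' = b x0"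
    unfolding m'_def by (intro antisym cINF_lower[OF bdd1 x0(1)] cINF_greatest) (use x0 O'ne in auto)
  have Bf: "\<And>y. y \<in> frontier \<Omega>' \<Longrightarrow> B \<le> b y" unfolding B_def using cINF_lower[OF bdd2] by blast
  have wd: "well_depth b \<Omega>' = B - m'" by (simp add: well_depth_def B_def m'_def)
  have upper: "\<exists>C>0. \<forall>p\<ge>0. 0 < lambda1 \<Omega> b p \<and> lambda1 \<Omega> b p \<le> C * exp (- \<omega> * p)"
    if om: "0 < \<omega>" "\<omega> < well_depth b \<Omega>'" for \<omega>
  proof -
    define \<eta> where "\<eta> = (B - m' - \<omega>) / 2"
    have eta: "\<eta> > 0" using om wd by (simp add: \<eta>_def)
    define K0 where "K0 = closure \<Omega>' \<inter> b -` {..B - \<eta>}"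
    have "closed K0" unfolding K0_def by (rule continuous_closed_preimage[OF bc']) auto
    moreover have "bounded K0" unfolding K0_def using O'b bounded_closure bounded_subset by blast
    ultimately have K0c: "compact K0" by (simp add: compact_eq_bounded_closed)
    have "b x0 \<le> B - \<eta>" using m'x0 om wd by (simp add: \<eta>_def field_simps)
    hence x0K: "x0 \<in> K0" using x0(1) by (simp add: K0_def)
    have K0sub: "K0 \<subseteq> \<Omega>'"
    proof
      fix x assume x: "x \<in> K0"
      hence "x \<notin> frontier \<Omega>'" using Bf[of x] eta by (force simp: K0_def)
      thus "x \<in> \<Omega>'" using x by (simp add: K0_def frontier_def interior_open[OF O'o])
    qed
    obtain u L V where u: "smooth_fun u" and L: "compact L" "L \<subseteq> \<Omega>'" "\<And>x. x \<notin> L \<Longrightarrow> u x = 0"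
      and V: "open V" "K0 \<subseteq> V" "\<And>x. x \<in> V \<Longrightarrow> u x = 1"
      using bump_exists[OF K0c _ O'o K0sub O'b] x0K by blast
    have tu: "test_fun \<Omega> u" unfolding test_fun_def using u L sub by blast
    have ux0: "u x0 = 1" using V x0K by auto
    have uS: "u \<in> Sset" unfolding Sset_def using tu ux0 by (auto intro!: exI[of _ x0])
    have x0O': "x0 \<in> \<Omega>'" using x0K K0sub by auto
    have x0O: "x0 \<in> \<Omega>" using x0O' sub by auto
    have "isCont b x0"
      using continuous_on_subset[OF bc closure_subset] Oo x0O continuous_on_eq_continuous_at by blast
    hence "eventually (\<lambda>x. b x < b x0 + \<eta>) (at x0)"
      using eta by (intro order_tendstoD(2)) (auto simp: isCont_def)
    then obtain d1 where d1: "d1 > 0" "\<And>x. x \<noteq> x0 \<Longrightarrow> dist x x0 < d1 \<Longrightarrow> b x < b x0 + \<eta>"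
      unfolding eventually_at by auto
    obtain d2 where d2: "d2 > 0" "ball x0 d2 \<subseteq> V \<inter> \<Omega>'"
      using open_contains_ball[of "V \<inter> \<Omega>'"] V(1,2) O'o x0K x0O' by blast
    define \<delta> where "\<delta> = min d1 d2"
    have dlt: "\<delta> > 0" using d1 d2 by (simp add: \<delta>_def)
    have ballp: "u x = 1 \<and> b x \<le> m' + \<eta>" if "x \<in> ball x0 \<delta>" for x
    proof -
      have "x \<in> V" using that d2 by (auto simp: \<delta>_def)
      moreover have "b x \<le> m' + \<eta>"
        using d1(2)[of x] that m'x0 eta by (cases "x = x0") (auto simp: \<delta>_def dist_commute)
      ultimately show ?thesis using V(3) by auto
    qed
    define \<mu> where "\<mu> = measure lborel (ball x0 \<delta>)"
    have mu: "\<mu> > 0" using dlt by (simp add: \<mu>_def)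
    define N where "N = integral\<^sup>L lborel (grad_sq u)"
    have N0: "N \<ge> 0" unfolding N_def by (simp add: grad_sq_nonneg)
    have gz: "\<And>x. x \<notin> L \<Longrightarrow> grad_sq u x = 0" using grad_sq_zero[OF u L(1) L(3)] .
    have LO: "L \<subseteq> \<Omega>" using L(2) sub by auto
    have bL: "continuous_on L b" by (rule continuous_on_subset[OF bc]) (use LO closure_subset in auto)
    have uc: "continuous_on UNIV u" using smooth_diff(2)[OF u] .
    have ig: "integrable lborel (grad_sq u)" by (rule int_cs[OF grad_sq_cont[OF u] L(1) gz])
    define C where "C = N / \<mu> + 1"
    have "N / \<mu> \<ge> 0" using N0 mu by simp
    hence Cpos: "C > 0" by (simp add: C_def)
    show ?thesis
    proof (intro exI[of _ C] conjI allI impI Cpos)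
      fix p :: real assume p: "p \<ge> 0"
      have "c p \<le> lambda1 \<Omega> b p" unfolding lam
        by (rule cINF_greatest) (use uS Qlow[OF p] in auto)
      thus "0 < lambda1 \<Omega> b p" using cpos[of p] by linarith
      have le1: "lambda1 \<Omega> b p \<le> Q p u" unfolding lam by (rule cINF_lower[OF bddQ[OF p] uS])
      define num where "num = integral\<^sup>L lborel (\<lambda>x. exp (- p * b x) * grad_sq u x)"
      define den where "den = integral\<^sup>L lborel (\<lambda>x. exp (- p * b x) * (u x)\<^sup>2)"
      have Qu: "Q p u = num / den" unfolding Q_def num_def den_def
        by (subst set_int_eq[OF LO], simp add: gz, subst set_int_eq[OF LO], simp add: L(3), rule refl)
      have iden: "integrable lborel (\<lambda>x. exp (- p * b x) * (u x)\<^sup>2)"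
        by (rule int_cs2[OF L(1)]) (auto intro!: continuous_intros bL continuous_on_subset[OF uc] simp: L(3))
      have inum: "integrable lborel (\<lambda>x. exp (- p * b x) * grad_sq u x)"
        by (rule int_cs2[OF L(1)]) (auto intro!: continuous_intros bL continuous_on_subset[OF grad_sq_cont[OF u]] simp: gz)
      have numle: "num \<le> exp (- p * (B - \<eta>)) * N"
      proof -
        have "num \<le> integral\<^sup>L lborel (\<lambda>x. exp (- p * (B - \<eta>)) * grad_sq u x)"
          unfolding num_def
        proof (rule integral_mono[OF inum])
          show "integrable lborel (\<lambda>x. exp (- p * (B - \<eta>)) * grad_sq u x)" using ig by simp
          fix x
          show "exp (- p * b x) * grad_sq u x \<le> exp (- p * (B - \<eta>)) * grad_sq u x"
          proof (cases "x \<in> L \<and> x \<notin> V")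
            case True
            hence "x \<notin> K0" using V(2) by auto
            moreover have "x \<in> closure \<Omega>'" using True L(2) closure_subset by auto
            ultimately have "B - \<eta> < b x" by (auto simp: K0_def)
            hence "- p * b x \<le> - p * (B - \<eta>)" using p by (simp add: mult_left_mono)
            thus ?thesis by (intro mult_right_mono) (auto simp: grad_sq_nonneg)
          next
            case False
            hence "grad_sq u x = 0" using gz grad_sq_const_open[OF u V(1) _ V(3)] by blast
            thus ?thesis by simp
          qed
        qed
        thus ?thesis by (simp add: N_def)
      qed
      have denge: "exp (- p * (m' + \<eta>)) * \<mu> \<le> den"
        unfolding den_def \<mu>_def
        by (rule int_ge_ball[OF iden]) (use ballp p in \<open>auto simp: mult_left_mono\<close>)
      have dpos: "0 < exp (- p * (m' + \<eta>)) * \<mu>" using mu by simp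
      have "Q p u \<le> exp (- p * (B - \<eta>)) * N / den"
        unfolding Qu using numle dpos denge by (intro divide_right_mono) auto
      also have "\<dots> \<le> exp (- p * (B - \<eta>)) * N / (exp (- p * (m' + \<eta>)) * \<mu>)"
        using N0 dpos denge by (intro divide_left_mono) auto
      also have "\<dots> = N / \<mu> * (exp (- p * (B - \<eta>)) / exp (- p * (m' + \<eta>)))"
        by (simp add: field_simps)
      also have "exp (- p * (B - \<eta>)) / exp (- p * (m' + \<eta>)) = exp (- \<omega> * p)"
        by (simp add: exp_diff[symmetric] \<eta>_def algebra_simps)
      also have "N / \<mu> * exp (- \<omega> * p) \<le> C * exp (- \<omega> * p)"
        by (intro mult_right_mono) (auto simp: C_def)
      finally show "lambda1 \<Omega> b p \<le> C * exp (- \<omega> * p)" using le1 by linarith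
    qed
  qed
  have liminf: "Liminf at_top (\<lambda>p. ereal (ln (1 / lambda1 \<Omega> b p) / p)) \<ge> ereal (well_depth b \<Omega>')"
    unfolding le_Liminf_iff
  proof (intro allI impI)
    fix y assume y: "y < ereal (well_depth b \<Omega>')"
    show "\<forall>\<^sub>F p in at_top. y < ereal (ln (1 / lambda1 \<Omega> b p) / p)"
    proof (cases y)
      case (real y')
      have wpos: "well_depth b \<Omega>' > 0" using well wd by (simp add: B_def m'_def)
      define \<omega> where "\<omega> = (max y' 0 + well_depth b \<Omega>') / 2"
      have om: "0 < \<omega>" "\<omega> < well_depth b \<Omega>'" "y' < \<omega>"
        using y real wpos by (auto simp: \<omega>_def)
      obtain C where C: "C > 0" "\<And>p. p \<ge> 0 \<Longrightarrow> 0 < lambda1 \<Omega> b p \<and> lambda1 \<Omega> b p \<le> C * exp (- \<omega> * p)"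
        using upper[OF om(1,2)] by blast
      show ?thesis using eventually_gt_at_top[of "max 0 (ln C / (\<omega> - y'))"]
      proof eventually_elim
        case (elim p)
        have p0: "p > 0" using elim by simp
        have "p > ln C / (\<omega> - y')" using elim by simp
        hence pc: "p * (\<omega> - y') > ln C" using om(3) by (simp add: pos_divide_less_eq mult.commute)
        have l0: "0 < lambda1 \<Omega> b p" and l1: "lambda1 \<Omega> b p \<le> C * exp (- \<omega> * p)" using C(2)[of p] p0 by auto
        have "ln (lambda1 \<Omega> b p) \<le> ln (C * exp (- \<omega> * p))" using l0 l1 by simp
        also have "\<dots> = ln C - \<omega> * p" using C(1) by (simp add: ln_mult)
        finally have "ln (1 / lambda1 \<Omega> b p) \<ge> \<omega> * p - ln C" using l0 by (simp add: ln_div)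
        hence "y' * p < ln (1 / lambda1 \<Omega> b p)" using pc by (simp add: algebra_simps)
        hence "y' < ln (1 / lambda1 \<Omega> b p) / p" using p0 by (simp add: pos_less_divide_eq)
        thus ?case using real by simp
      qed
    next
      case PInf thus ?thesis using y by simp
    next
      case MInf thus ?thesis by simp
    qed
  qed
  show ?thesis using liminf upper by blast
qed

end
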